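(* Let $D=3$, $L>0$, $\omega>0$, and define on $\mathbb R\times[-L/2,L/2]$ the maps $T(\tau,\sigma):=\tau$ and $$Y(\tau,\sigma):=(\sigma\cos\omega\tau,\ \sigma\sin\omega\tau)\in\mathbb R^2 .$$ Then $Y'^2=1$ and $(\dot Y,Y')=0$ identically, $(T,Y)$ satisfies the Euler–Lagrange equations of $L_{ns}$ on $\mathbb R\times(-L/2,L/2)$, and the free-end boundary conditions $$\frac{\partial L_{ns}}{\partial T'}\Big|_{\sigma=\pm L/2}=0,\qquad \frac{\partial L_{ns}}{\partial Y'^i}\Big|_{\sigma=\pm L/2}=0\ \ (i=1,2)$$ hold for all $\tau$ if and only if $L\omega=2\sqrt2$.
   Context: Coordinates are $(\tau,\sigma)$; dot and prime denote $\partial_\tau$, $\partial_\sigma$. For vectors in $\mathbb R^{2}$, $(\cdot,\cdot)$ is the Euclidean scalar product and $V^2=(V,V)$. Units with speed of light $c=1$. Fix a constant $\rho>0$. Define $$A^2:=\dot T^2Y'^2+T'^2\dot Y^2-2\dot TT'(\dot Y,Y'),\qquad N:=\dot Y^2Y'^2-(\dot Y,Y')^2,$$ and the nonrelativistic string Lagrangian density, regarded as a function of $(\dot T,T',\dot Y,Y')$ on the region $A^2>0$: $$L_{ns}:=\rho\Big[\frac{N}{2\sqrt{A^2}}-\sqrt{A^2}\Big].$$ The Euler–Lagrange equations of $L_{ns}$ are $$\partial_\tau\frac{\partial L_{ns}}{\partial\dot T}+\partial_\sigma\frac{\partial L_{ns}}{\partial T'}=0,\qquad \partial_\tau\frac{\partial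 L_{ns}}{\partial\dot Y^i}+\partial_\sigma\frac{\partial L_{ns}}{\partial Y'^i}=0\quad(i=1,2),$$ where the partial derivatives of $L_{ns}$ are evaluated along $(T,Y)$. *)

theory Defs
  imports "HOL-Analysis.Analysis"
begin

definition Asq :: "real \<Rightarrow> real \<Rightarrow> real^2 \<Rightarrow> real^2 \<Rightarrow> real" where
  "Asq Td Tp Yd Yp = Td^2 * (Yp \<bullet> Yp) + Tp^2 * (Yd \<bullet> Yd) - 2 * Td * Tp * (Yd \<bullet> Yp)"

definition Nf :: "real^2 \<Rightarrow> real^2 \<Rightarrow> real" where
  "Nf Yd Yp = (Yd \<bullet> Yd) * (Yp \<bullet> Yp) - (Yd \<bullet> Yp)^2"

definition Lns :: "real \<Rightarrow> real \<Rightarrow> real \<Rightarrow> real^2 \<Rightarrow> real^2 \<Rightarrow> real" where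
  "Lns \<rho> Td Tp Yd Yp = \<rho> * (Nf Yd Yp / (2 * sqrt (Asq Td Tp Yd Yp)) - sqrt (Asq Td Tp Yd Yp))"

definition vupd :: "real^2 \<Rightarrow> 2 \<Rightarrow> real \<Rightarrow> real^2" where
  "vupd v i s = (\<chi> j. if j = i then s else v $ j)"

definition dL_dTd :: "real \<Rightarrow> real \<Rightarrow> real \<Rightarrow> real^2 \<Rightarrow> real^2 \<Rightarrow> real" where
  "dL_dTd \<rho> Td Tp Yd Yp = deriv (\<lambda>s. Lns \<rho> s Tp Yd Yp) Td"

definition dL_dTp :: "real \<Rightarrow> real \<Rightarrow> real \<Rightarrow> real^2 \<Rightarrow> real^2 \<Rightarrow> real" where
  "dL_dTp \<rho> Td Tp Yd Yp = deriv (\<lambda>s. Lns \<rho> Td s Yd Yp) Tp"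

definition dL_dYd :: "real \<Rightarrow> 2 \<Rightarrow> real \<Rightarrow> real \<Rightarrow> real^2 \<Rightarrow> real^2 \<Rightarrow> real" where
  "dL_dYd \<rho> i Td Tp Yd Yp = deriv (\<lambda>s. Lns \<rho> Td Tp (vupd Yd i s) Yp) (Yd $ i)"

definition dL_dYp :: "real \<Rightarrow> 2 \<Rightarrow> real \<Rightarrow> real \<Rightarrow> real^2 \<Rightarrow> real^2 \<Rightarrow> real" where
  "dL_dYp \<rho> i Td Tp Yd Yp = deriv (\<lambda>s. Lns \<rho> Td Tp Yd (vupd Yp i s)) (Yp $ i)"

definition Tsol :: "real \<Rightarrow> real \<Rightarrow> real" where
  "Tsol \<tau> \<sigma> = \<tau>"

definition Ysol :: "real \<Rightarrow> real \<Rightarrow> real \<Rightarrow> real^2" where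
  "Ysol \<omega> \<tau> \<sigma> = vector [\<sigma> * cos (\<omega> * \<tau>), \<sigma> * sin (\<omega> * \<tau>)]"

definition Tdot :: "real \<Rightarrow> real \<Rightarrow> real" where
  "Tdot \<tau> \<sigma> = deriv (\<lambda>t. Tsol t \<sigma>) \<tau>"
definition Tprime :: "real \<Rightarrow> real \<Rightarrow> real" where
  "Tprime \<tau> \<sigma> = deriv (\<lambda>s. Tsol \<tau> s) \<sigma>"
definition Ydot :: "real \<Rightarrow> real \<Rightarrow> real \<Rightarrow> real^2" where
  "Ydot \<omega> \<tau> \<sigma> = vector_derivative (\<lambda>t. Ysol \<omega> t \<sigma>) (at \<tau>)"
definition Yprime :: "real \<Rightarrow> real \<Rightarrow> real \<Rightarrow> real^2" where
  "Yprime \<omega> \<tau> \<sigma> = vector_derivative (\<lambda>s. Ysol \<omega> \<tau> s) (at \<sigma>)"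

end

theory Submission imports Defs begin

lemma vec2_decomp: "vector [a, b] = a *\<^sub>R (vector [1,0] :: real^2) + b *\<^sub>R vector [0,1]"
  by (simp add: vec_eq_iff forall_2)

lemma inner_vec2: "(vector [a, b] :: real^2) \<bullet> vector [c, d] = a*c + b*d"
  by (simp add: inner_vec_def sum_2)

lemma vupd1: "vupd (vector [a,b]) 1 s = vector [s,b]"
  by (simp add: vupd_def vec_eq_iff forall_2)
lemma vupd2: "vupd (vector [a,b]) 2 s = vector [a,s]"
  by (simp add: vupd_def vec_eq_iff forall_2)

lemma Tdot_eq: "Tdot t s = 1" unfolding Tdot_def Tsol_def by simp
lemma Tprime_eq: "Tprime t s = 0" unfolding Tprime_def Tsol_def by simp

lemma Ydot_eq: "Ydot \<omega> t s = vector [- s * \<omega> * sin(\<omega>*t), s * \<omega> * cos(\<omega>*t)]"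
proof -
  have "((\<lambda>t. Ysol \<omega> t s) has_vector_derivative vector [- s * \<omega> * sin(\<omega>*t), s * \<omega> * cos(\<omega>*t)]) (at t)"
    unfolding Ysol_def vec2_decomp[of "s * cos (\<omega> * _)"]
    apply (subst vec2_decomp)
    apply (rule derivative_eq_intros refl)+
    apply (simp add: vec_eq_iff forall_2)
    done
  then show ?thesis unfolding Ydot_def by (rule vector_derivative_at)
qed

lemma Yprime_eq: "Yprime \<omega> t s = vector [cos(\<omega>*t), sin(\<omega>*t)]"
proof -
  have "((\<lambda>s. Ysol \<omega> t s) has_vector_derivative vector [cos(\<omega>*t), sin(\<omega>*t)]) (at s)"
    unfolding Ysol_def
    apply (subst vec2_decomp)
    apply (rule derivative_eq_intros refl)+
    apply (simp add: vec_eq_iff forall_2)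
    done
  then show ?thesis unfolding Yprime_def by (rule vector_derivative_at)
qed

lemma key:
  assumes u: "(u has_real_derivative u') (at x)" and u1: "u x = 1"
    and n: "(n has_real_derivative n') (at x)" and n0: "n x = n0"
  shows "deriv (\<lambda>s. \<rho> * (n s / (2 * sqrt (u s)) - sqrt (u s))) x = \<rho> * (n'/2 - n0 * u'/4 - u'/2)"
proof -
  have "((\<lambda>s. \<rho> * (n s / (2 * sqrt (u s)) - sqrt (u s))) has_real_derivative
     \<rho> * ((n' * (2 * sqrt (u x)) - n x * (2 * (u' * inverse (sqrt (u x)) / 2))) / (2 * sqrt (u x)) ^ 2
       - u' * inverse (sqrt (u x)) / 2)) (at x)"
    by (rule derivative_eq_intros u n refl | simp add: u1)+
  then show ?thesis using u1 n0 by (simp add: DERIV_imp_deriv field_simps)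
qed

context
  fixes a b c d :: real
  assumes cc: "c*c+d*d = 1" and o: "a*c+b*d = 0"
begin

lemma pTd: "dL_dTd \<rho> 1 0 (vector[a,b]) (vector[c,d]) = \<rho> * (- (a*a+b*b)/2 - 1)"
proof -
  have "dL_dTd \<rho> 1 0 (vector[a,b]) (vector[c,d]) = \<rho> * (0/2 - (a*a+b*b) * 2/4 - 2/2)"
    unfolding dL_dTd_def Lns_def
    by (rule key[where u="\<lambda>s. Asq s 0 (vector[a,b]) (vector[c,d])" and n="\<lambda>s. Nf (vector[a,b]) (vector[c,d])"]) (auto intro!: derivative_eq_intros simp: Asq_def Nf_def inner_vec2 cc o)
  then show ?thesis by (simp add: field_simps)
qed

lemma pTp: "dL_dTp \<rho> 1 0 (vector[a,b]) (vector[c,d]) = 0"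
proof -
  have "dL_dTp \<rho> 1 0 (vector[a,b]) (vector[c,d]) = \<rho> * (0/2 - (a*a+b*b) * 0/4 - 0/2)"
    unfolding dL_dTp_def Lns_def
    by (rule key[where u="\<lambda>s. Asq 1 s (vector[a,b]) (vector[c,d])" and n="\<lambda>s. Nf (vector[a,b]) (vector[c,d])"]) (auto intro!: derivative_eq_intros simp: Asq_def Nf_def inner_vec2 cc o)
  then show ?thesis by simp
qed

lemma pYd1: "dL_dYd \<rho> 1 1 0 (vector[a,b]) (vector[c,d]) = \<rho> * a"
proof -
  have "dL_dYd \<rho> 1 1 0 (vector[a,b]) (vector[c,d]) = \<rho> * ((2*a)/2 - (a*a+b*b) * 0/4 - 0/2)"
    unfolding dL_dYd_def Lns_def vupd1 vector_2
    by (rule key[where u="\<lambda>s. Asq 1 0 (vector[s,b]) (vector[c,d])" and n="\<lambda>s. Nf (vector[s,b]) (vector[c,d])"]) (auto intro!: derivative_eq_intros simp: Asq_def Nf_def inner_vec2 cc o algebra_simps)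
  then show ?thesis by simp
qed

lemma pYd2: "dL_dYd \<rho> 2 1 0 (vector[a,b]) (vector[c,d]) = \<rho> * b"
proof -
  have "dL_dYd \<rho> 2 1 0 (vector[a,b]) (vector[c,d]) = \<rho> * ((2*b)/2 - (a*a+b*b) * 0/4 - 0/2)"
    unfolding dL_dYd_def Lns_def vupd2 vector_2
    by (rule key[where u="\<lambda>s. Asq 1 0 (vector[a,s]) (vector[c,d])" and n="\<lambda>s. Nf (vector[a,s]) (vector[c,d])"]) (auto intro!: derivative_eq_intros simp: Asq_def Nf_def inner_vec2 cc o algebra_simps)
  then show ?thesis by simp
qed

lemma pYp1: "dL_dYp \<rho> 1 1 0 (vector[a,b]) (vector[c,d]) = \<rho> * c * ((a*a+b*b)/2 - 1)"
proof -
  have "dL_dYp \<rho> 1 1 0 (vector[a,b]) (vector[c,d]) = \<rho> * ((2*(a*a+b*b)*c)/2 - (a*a+b*b) * (2*c)/4 - (2*c)/2)"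
    unfolding dL_dYp_def Lns_def vupd1 vector_2
    by (rule key[where u="\<lambda>s. Asq 1 0 (vector[a,b]) (vector[s,d])" and n="\<lambda>s. Nf (vector[a,b]) (vector[s,d])"]) (auto intro!: derivative_eq_intros simp: Asq_def Nf_def inner_vec2 cc o algebra_simps)
  then show ?thesis by (simp add: algebra_simps)
qed

lemma pYp2: "dL_dYp \<rho> 2 1 0 (vector[a,b]) (vector[c,d]) = \<rho> * d * ((a*a+b*b)/2 - 1)"
proof -
  have "dL_dYp \<rho> 2 1 0 (vector[a,b]) (vector[c,d]) = \<rho> * ((2*(a*a+b*b)*d)/2 - (a*a+b*b) * (2*d)/4 - (2*d)/2)"
    unfolding dL_dYp_def Lns_def vupd2 vector_2
    by (rule key[where u="\<lambda>s. Asq 1 0 (vector[a,b]) (vector[c,s])" and n="\<lambda>s. Nf (vector[a,b]) (vector[c,s])"]) (auto intro!: derivative_eq_intros simp: Asq_def Nf_def inner_vec2 cc o algebra_simps)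
  then show ?thesis by (simp add: algebra_simps)
qed
end

lemma sol_vals:
  fixes \<omega> t s :: real
  defines "a \<equiv> - s * \<omega> * sin(\<omega>*t)" and "b \<equiv> s * \<omega> * cos(\<omega>*t)"
    and "c \<equiv> cos(\<omega>*t)" and "d \<equiv> sin(\<omega>*t)"
  shows "c*c+d*d = 1" "a*c+b*d = 0" "a*a+b*b = s^2*\<omega>^2"
proof -
  have sc: "sin(\<omega>*t)^2 + cos(\<omega>*t)^2 = 1" by simp
  show "c*c+d*d = 1" unfolding c_def d_def using sc by (simp add: power2_eq_square algebra_simps)
  show "a*c+b*d = 0" unfolding a_def b_def c_def d_def by (simp add: algebra_simps)
  have "a*a+b*b = s^2*\<omega>^2 * (sin(\<omega>*t)^2 + cos(\<omega>*t)^2)"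
    unfolding a_def b_def power2_eq_square by algebra
  then show "a*a+b*b = s^2*\<omega>^2" using sc by simp
qed

lemma along:
  fixes \<rho> \<omega> t s :: real
  shows "dL_dTd \<rho> (Tdot t s) (Tprime t s) (Ydot \<omega> t s) (Yprime \<omega> t s) = \<rho> * (- (s^2*\<omega>^2)/2 - 1)"
    "dL_dTp \<rho> (Tdot t s) (Tprime t s) (Ydot \<omega> t s) (Yprime \<omega> t s) = 0"
    "dL_dYd \<rho> 1 (Tdot t s) (Tprime t s) (Ydot \<omega> t s) (Yprime \<omega> t s) = \<rho> * (- s * \<omega> * sin(\<omega>*t))"
    "dL_dYd \<rho> 2 (Tdot t s) (Tprime t s) (Ydot \<omega> t s) (Yprime \<omega> t s) = \<rho> * (s * \<omega> * cos(\<omega>*t))"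
    "dL_dYp \<rho> 1 (Tdot t s) (Tprime t s) (Ydot \<omega> t s) (Yprime \<omega> t s) = \<rho> * cos(\<omega>*t) * ((s^2*\<omega>^2)/2 - 1)"
    "dL_dYp \<rho> 2 (Tdot t s) (Tprime t s) (Ydot \<omega> t s) (Yprime \<omega> t s) = \<rho> * sin(\<omega>*t) * ((s^2*\<omega>^2)/2 - 1)"
  unfolding Tdot_eq Tprime_eq Ydot_eq Yprime_eq
  using pTd[OF sol_vals(1,2), unfolded sol_vals(3)] pTp[OF sol_vals(1,2)] pYd1[OF sol_vals(1,2)] pYd2[OF sol_vals(1,2)]
    pYp1[OF sol_vals(1,2), unfolded sol_vals(3)] pYp2[OF sol_vals(1,2), unfolded sol_vals(3)]
  by simp_all

theorem mainTheorem7: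
  fixes \<rho> L \<omega> :: real
  assumes "\<rho> > 0" and "L > 0" and "\<omega> > 0"
  shows "(\<forall>\<tau> \<sigma>. Yprime \<omega> \<tau> \<sigma> \<bullet> Yprime \<omega> \<tau> \<sigma> = 1 \<and> Ydot \<omega> \<tau> \<sigma> \<bullet> Yprime \<omega> \<tau> \<sigma> = 0)
    \<and> (\<forall>\<tau> \<sigma>. -L/2 < \<sigma> \<and> \<sigma> < L/2 \<longrightarrow>
         deriv (\<lambda>t. dL_dTd \<rho> (Tdot t \<sigma>) (Tprime t \<sigma>) (Ydot \<omega> t \<sigma>) (Yprime \<omega> t \<sigma>)) \<tau>
         + deriv (\<lambda>s. dL_dTp \<rho> (Tdot \<tau> s) (Tprime \<tau> s) (Ydot \<omega> \<tau> s) (Yprime \<omega> \<tau> s)) \<sigma> = 0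
       \<and> (\<forall>i::2.
         deriv (\<lambda>t. dL_dYd \<rho> i (Tdot t \<sigma>) (Tprime t \<sigma>) (Ydot \<omega> t \<sigma>) (Yprime \<omega> t \<sigma>)) \<tau>
         + deriv (\<lambda>s. dL_dYp \<rho> i (Tdot \<tau> s) (Tprime \<tau> s) (Ydot \<omega> \<tau> s) (Yprime \<omega> \<tau> s)) \<sigma> = 0))
    \<and> ((\<forall>\<tau>. \<forall>\<sigma>\<in>{L/2, -L/2}.
          dL_dTp \<rho> (Tdot \<tau> \<sigma>) (Tprime \<tau> \<sigma>) (Ydot \<omega> \<tau> \<sigma>) (Yprime \<omega> \<tau> \<sigma>) = 0
        \<and> (\<forall>i::2. dL_dYp \<rho> i (Tdot \<tau> \<sigma>) (Tprime \<tau> \<sigma>) (Ydot \<omega> \<tau> \<sigma>) (Yprime \<omega> \<tau> \<sigma>) = 0))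
       \<longleftrightarrow> L * \<omega> = 2 * sqrt 2)"
proof -
  have part1: "\<forall>\<tau> \<sigma>. Yprime \<omega> \<tau> \<sigma> \<bullet> Yprime \<omega> \<tau> \<sigma> = 1 \<and> Ydot \<omega> \<tau> \<sigma> \<bullet> Yprime \<omega> \<tau> \<sigma> = 0"
    using sol_vals(1,2) by (simp add: Ydot_eq Yprime_eq inner_vec2)
  have part2: "deriv (\<lambda>t. dL_dTd \<rho> (Tdot t \<sigma>) (Tprime t \<sigma>) (Ydot \<omega> t \<sigma>) (Yprime \<omega> t \<sigma>)) \<tau>
         + deriv (\<lambda>s. dL_dTp \<rho> (Tdot \<tau> s) (Tprime \<tau> s) (Ydot \<omega> \<tau> s) (Yprime \<omega> \<tau> s)) \<sigma> = 0
       \<and> (\<forall>i::2.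
         deriv (\<lambda>t. dL_dYd \<rho> i (Tdot t \<sigma>) (Tprime t \<sigma>) (Ydot \<omega> t \<sigma>) (Yprime \<omega> t \<sigma>)) \<tau>
         + deriv (\<lambda>s. dL_dYp \<rho> i (Tdot \<tau> s) (Tprime \<tau> s) (Ydot \<omega> \<tau> s) (Yprime \<omega> \<tau> s)) \<sigma> = 0)" for \<tau> \<sigma>
  proof -
    have d1: "deriv (\<lambda>t. \<rho> * (- \<sigma> * \<omega> * sin(\<omega>*t))) \<tau> = \<rho> * (- \<sigma> * \<omega> * (cos(\<omega>*\<tau>) * \<omega>))"
      by (rule DERIV_imp_deriv) (auto intro!: derivative_eq_intros)
    have d2: "deriv (\<lambda>t. \<rho> * (\<sigma> * \<omega> * cos(\<omega>*t))) \<tau> = \<rho> * (\<sigma> * \<omega> * (- sin(\<omega>*\<tau>) * \<omega>))"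
      by (rule DERIV_imp_deriv) (auto intro!: derivative_eq_intros)
    have d3: "deriv (\<lambda>s. \<rho> * cos(\<omega>*\<tau>) * ((s^2*\<omega>^2)/2 - 1)) \<sigma> = \<rho> * cos(\<omega>*\<tau>) * (2*\<sigma>*\<omega>^2/2)"
      by (rule DERIV_imp_deriv) (auto intro!: derivative_eq_intros)
    have d4: "deriv (\<lambda>s. \<rho> * sin(\<omega>*\<tau>) * ((s^2*\<omega>^2)/2 - 1)) \<sigma> = \<rho> * sin(\<omega>*\<tau>) * (2*\<sigma>*\<omega>^2/2)"
      by (rule DERIV_imp_deriv) (auto intro!: derivative_eq_intros)
    show ?thesis
      unfolding along forall_2 using d1 d2 d3 d4
      by (simp add: power2_eq_square algebra_simps)
  qed
  have part3: "(\<forall>\<tau>. \<forall>\<sigma>\<in>{L/2, -L/2}.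
          dL_dTp \<rho> (Tdot \<tau> \<sigma>) (Tprime \<tau> \<sigma>) (Ydot \<omega> \<tau> \<sigma>) (Yprime \<omega> \<tau> \<sigma>) = 0
        \<and> (\<forall>i::2. dL_dYp \<rho> i (Tdot \<tau> \<sigma>) (Tprime \<tau> \<sigma>) (Ydot \<omega> \<tau> \<sigma>) (Yprime \<omega> \<tau> \<sigma>) = 0))
       \<longleftrightarrow> L * \<omega> = 2 * sqrt 2"
  proof
    assume h: "\<forall>\<tau>. \<forall>\<sigma>\<in>{L/2, -L/2}.
          dL_dTp \<rho> (Tdot \<tau> \<sigma>) (Tprime \<tau> \<sigma>) (Ydot \<omega> \<tau> \<sigma>) (Yprime \<omega> \<tau> \<sigma>) = 0
        \<and> (\<forall>i::2. dL_dYp \<rho> i (Tdot \<tau> \<sigma>) (Tprime \<tau> \<sigma>) (Ydot \<omega> \<tau> \<sigma>) (Yprime \<omega> \<tau> \<sigma>) = 0)"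
    then have "dL_dYp \<rho> 1 (Tdot 0 (L/2)) (Tprime 0 (L/2)) (Ydot \<omega> 0 (L/2)) (Yprime \<omega> 0 (L/2)) = 0" by auto
    then have "(L/2)^2*\<omega>^2/2 - 1 = 0" using assms by (simp add: along)
    then have "(L*\<omega>)^2 = 8" by (simp add: power2_eq_square field_simps)
    then have "(L*\<omega>)^2 = (2 * sqrt 2)^2" by (simp add: power_mult_distrib)
    then show "L * \<omega> = 2 * sqrt 2"
      by (rule power2_eq_imp_eq) (use assms in auto)
  next
    assume "L * \<omega> = 2 * sqrt 2"
    then have "(L*\<omega>)^2 = 8" by (simp add: power_mult_distrib)
    then have e: "(L/2)^2*\<omega>^2/2 - 1 = 0" "(-L/2)^2*\<omega>^2/2 - 1 = 0"
      by (simp_all add: power2_eq_square field_simps)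
    show "\<forall>\<tau>. \<forall>\<sigma>\<in>{L/2, -L/2}.
          dL_dTp \<rho> (Tdot \<tau> \<sigma>) (Tprime \<tau> \<sigma>) (Ydot \<omega> \<tau> \<sigma>) (Yprime \<omega> \<tau> \<sigma>) = 0
        \<and> (\<forall>i::2. dL_dYp \<rho> i (Tdot \<tau> \<sigma>) (Tprime \<tau> \<sigma>) (Ydot \<omega> \<tau> \<sigma>) (Yprime \<omega> \<tau> \<sigma>) = 0)"
      unfolding along forall_2 using e by simp
  qed
  show ?thesis using part1 part2 part3 by blast
qed

end
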